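(* Let $(M,g,f,\mu)$ be a non-isotropic quasi-Einstein Lorentzian structure of dimension $4$ with $\mu\neq -\frac12$, such that $\operatorname{div}W=0$ and $W(X,\nabla f,Z,\nabla f)=0$ for all vector fields $X,Z$. Let $E_1=\nabla f/\|\nabla f\|$, where $\|\nabla f\|=|g(\nabla f,\nabla f)|^{1/2}$, and complete it to any local orthonormal frame $\{E_1,E_2,E_3,E_4\}$. Then $\rho(E_i,E_j)=0$ for all $i\neq j$, i.e. the Ricci operator is diagonal in this frame.
   Context: Let $(M,g)$ be a pseudo-Riemannian manifold with Levi-Civita connection $\nabla$, Ricci tensor $\rho$, scalar curvature $\tau$, Hessian $\operatorname{Hes}_f=\nabla df$. The structure $(M,g,f,\mu)$, with $f$ a smooth function and $\mu$ a real constant, is called quasi-Einstein (qE) if there is a smooth function $\lambda$ with $\operatorname{Hes}_f+\rho-\mu\, df\otimes df=\lambda g$. It is called non-isotropic if $g(\nabla f,\nabla f)\neq 0$ everywhere. Curvature convention: $R(X,Y)=\nabla_{[X,Y]}-[\nabla_X,\nabla_Y]$, $R(X,Y,Z,T)=g(R(X,Y)Z,T)$. In dimension 4 the Weyl tensor is $W(X,Y,Z,T)=R(X,Y,Z,T)+\frac{\tau}{6}\{g(X,Z)g(Y,T)-g(X,T)g(Y,Z)\}+\frac12\{\rho(X,T)g(Y,Z)-\rho(X,Z)g(Y,T)+\rho(Y,Z)g(X,T)-\rho(Y,T)g(X,Z)\}$, and $\operatorname{div}W(X,Y,Z)=-\frac12\{(\nabla_X\rho)(Y,Z)-(\nabla_Y\rho)(X,Z)\}+\frac1{12}\{X(\tau)g(Y,Z)-Y(\tau)g(X,Z)\}$.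 Harmonic Weyl tensor means $\operatorname{div}W=0$. *)

theory Defs
  imports "HOL-Analysis.Analysis"
begin

text \<open>Local (coordinate chart) model of a 4-dimensional pseudo-Riemannian manifold:
  an open set U of real^4 with a metric given by a matrix-valued function g.\<close>

type_synonym pt = "real^4"
type_synonym metric = "pt \<Rightarrow> real^4^4"

definition pd :: "4 \<Rightarrow> (pt \<Rightarrow> real) \<Rightarrow> pt \<Rightarrow> real" where
  "pd i F x = deriv (\<lambda>t. F (x + t *\<^sub>R axis i 1)) 0"

fun iter_pd :: "4 list \<Rightarrow> (pt \<Rightarrow> real) \<Rightarrow> pt \<Rightarrow> real" where
  "iter_pd [] F = F"
| "iter_pd (i # is) F = pd i (iter_pd is F)"

definition smooth_fun :: "pt set \<Rightarrow> (pt \<Rightarrow> real) \<Rightarrow> bool" where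
  "smooth_fun U F \<longleftrightarrow> (\<forall>is. continuous_on U (iter_pd is F) \<and>
      (\<forall>x\<in>U. \<forall>i. (\<lambda>t. iter_pd is F (x + t *\<^sub>R axis i 1)) differentiable (at 0)))"

definition minkowski :: "real^4^4" where
  "minkowski = (\<chi> i j. if i = j then (if i = 0 then -1 else 1) else 0)"

definition lorentzian_metric :: "pt set \<Rightarrow> metric \<Rightarrow> bool" where
  "lorentzian_metric U g \<longleftrightarrow>
     (\<forall>i j. smooth_fun U (\<lambda>y. g y $ i $ j)) \<and>
     (\<forall>x\<in>U. transpose (g x) = g x \<and>
        (\<exists>P::real^4^4. invertible P \<and> transpose P ** g x ** P = minkowski))"

definition gv :: "metric \<Rightarrow> pt \<Rightarrow> real^4 \<Rightarrow> real^4 \<Rightarrow> real" where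
  "gv g x X Y = (\<Sum>i\<in>UNIV. \<Sum>j\<in>UNIV. g x $ i $ j * X $ i * Y $ j)"

definition gi :: "metric \<Rightarrow> pt \<Rightarrow> 4 \<Rightarrow> 4 \<Rightarrow> real" where
  "gi g x k l = matrix_inv (g x) $ k $ l"

definition Chr :: "metric \<Rightarrow> pt \<Rightarrow> 4 \<Rightarrow> 4 \<Rightarrow> 4 \<Rightarrow> real" where
  "Chr g x k i j = (1/2) * (\<Sum>l\<in>UNIV. gi g x k l *
      (pd i (\<lambda>y. g y $ j $ l) x + pd j (\<lambda>y. g y $ i $ l) x - pd l (\<lambda>y. g y $ i $ j) x))"

text \<open>Rstd g x l i j k: component l of ([nabla_i,nabla_j] - nabla_[.,.]) d_k (standard sign).\<close>
definition Rstd :: "metric \<Rightarrow> pt \<Rightarrow> 4 \<Rightarrow> 4 \<Rightarrow> 4 \<Rightarrow> 4 \<Rightarrow> real" where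
  "Rstd g x l i j k = pd i (\<lambda>y. Chr g y l j k) x - pd j (\<lambda>y. Chr g y l i k) x
     + (\<Sum>m\<in>UNIV. Chr g x m j k * Chr g x l i m - Chr g x m i k * Chr g x l j m)"

text \<open>Paper's convention R(X,Y) = nabla_[X,Y] - [nabla_X,nabla_Y], R(X,Y,Z,T) = g(R(X,Y)Z,T).\<close>
definition Rc :: "metric \<Rightarrow> pt \<Rightarrow> 4 \<Rightarrow> 4 \<Rightarrow> 4 \<Rightarrow> 4 \<Rightarrow> real" where
  "Rc g x i j k t = - (\<Sum>l\<in>UNIV. Rstd g x l i j k * g x $ l $ t)"

text \<open>Ricci tensor (positive on round spheres).\<close>
definition ric :: "metric \<Rightarrow> pt \<Rightarrow> 4 \<Rightarrow> 4 \<Rightarrow> real" where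
  "ric g x j k = (\<Sum>i\<in>UNIV. Rstd g x i i j k)"

definition scal :: "metric \<Rightarrow> pt \<Rightarrow> real" where
  "scal g x = (\<Sum>j\<in>UNIV. \<Sum>k\<in>UNIV. gi g x j k * ric g x j k)"

definition Wc :: "metric \<Rightarrow> pt \<Rightarrow> 4 \<Rightarrow> 4 \<Rightarrow> 4 \<Rightarrow> 4 \<Rightarrow> real" where
  "Wc g x i j k t = Rc g x i j k t
     + scal g x / 6 * (g x $ i $ k * g x $ j $ t - g x $ i $ t * g x $ j $ k)
     + 1/2 * (ric g x i t * g x $ j $ k - ric g x i k * g x $ j $ t
              + ric g x j k * g x $ i $ t - ric g x j t * g x $ i $ k)"

definition nabla_ric :: "metric \<Rightarrow> pt \<Rightarrow> 4 \<Rightarrow> 4 \<Rightarrow> 4 \<Rightarrow> real" where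
  "nabla_ric g x i j k = pd i (\<lambda>y. ric g y j k) x
     - (\<Sum>m\<in>UNIV. Chr g x m i j * ric g x m k + Chr g x m i k * ric g x j m)"

definition divW :: "metric \<Rightarrow> pt \<Rightarrow> 4 \<Rightarrow> 4 \<Rightarrow> 4 \<Rightarrow> real" where
  "divW g x i j k = - 1/2 * (nabla_ric g x i j k - nabla_ric g x j i k)
     + 1/12 * (pd i (scal g) x * g x $ j $ k - pd j (scal g) x * g x $ i $ k)"

definition hess :: "metric \<Rightarrow> (pt \<Rightarrow> real) \<Rightarrow> pt \<Rightarrow> 4 \<Rightarrow> 4 \<Rightarrow> real" where
  "hess g f x i j = pd i (pd j f) x - (\<Sum>k\<in>UNIV. Chr g x k i j * pd k f x)"

definition grad :: "metric \<Rightarrow> (pt \<Rightarrow> real) \<Rightarrow> pt \<Rightarrow> real^4" where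
  "grad g f x = (\<chi> k. \<Sum>l\<in>UNIV. gi g x k l * pd l f x)"

definition ev2 :: "(4 \<Rightarrow> 4 \<Rightarrow> real) \<Rightarrow> real^4 \<Rightarrow> real^4 \<Rightarrow> real" where
  "ev2 B X Y = (\<Sum>i\<in>UNIV. \<Sum>j\<in>UNIV. B i j * X $ i * Y $ j)"

definition ev4 :: "(4 \<Rightarrow> 4 \<Rightarrow> 4 \<Rightarrow> 4 \<Rightarrow> real) \<Rightarrow> real^4 \<Rightarrow> real^4 \<Rightarrow> real^4 \<Rightarrow> real^4 \<Rightarrow> real" where
  "ev4 B X Y Z T = (\<Sum>i\<in>UNIV. \<Sum>j\<in>UNIV. \<Sum>k\<in>UNIV. \<Sum>l\<in>UNIV.
      B i j k l * X $ i * Y $ j * Z $ k * T $ l)"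

definition quasi_einstein :: "pt set \<Rightarrow> metric \<Rightarrow> (pt \<Rightarrow> real) \<Rightarrow> real \<Rightarrow> bool" where
  "quasi_einstein U g f \<mu> \<longleftrightarrow> smooth_fun U f \<and>
     (\<exists>lam. smooth_fun U lam \<and> (\<forall>x\<in>U. \<forall>i j.
        hess g f x i j + ric g x i j - \<mu> * (pd i f x * pd j f x) = lam x * g x $ i $ j))"

definition non_isotropic :: "pt set \<Rightarrow> metric \<Rightarrow> (pt \<Rightarrow> real) \<Rightarrow> bool" where
  "non_isotropic U g f \<longleftrightarrow> (\<forall>x\<in>U. gv g x (grad g f x) (grad g f x) \<noteq> 0)"

definition harmonic_weyl :: "pt set \<Rightarrow> metric \<Rightarrow> bool" where
  "harmonic_weyl U g \<longleftrightarrow> (\<forall>x\<in>U. \<forall>i j k. divW g x i j k = 0)"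

end

theory Submission
  imports Defs
begin


definition hdr :: "4 \<Rightarrow> (pt \<Rightarrow> real) \<Rightarrow> pt \<Rightarrow> real \<Rightarrow> bool" where
  "hdr i F x D \<longleftrightarrow> ((\<lambda>t. F (x + t *\<^sub>R axis i 1)) has_real_derivative D) (at 0)"

definition ld :: "4 \<Rightarrow> (pt \<Rightarrow> real) \<Rightarrow> pt \<Rightarrow> bool" where
  "ld i F x \<longleftrightarrow> (\<exists>D. hdr i F x D)"

lemma hd_pd: "hdr i F x D \<Longrightarrow> pd i F x = D"
  unfolding hdr_def pd_def by (rule DERIV_imp_deriv)

lemma ld_hd: "ld i F x \<Longrightarrow> hdr i F x (pd i F x)"
  unfolding ld_def using hd_pd by metis

lemma hd_ld: "hdr i F x D \<Longrightarrow> ld i F x" unfolding ld_def by blast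

lemma hd_add: "hdr i F x a \<Longrightarrow> hdr i G x b \<Longrightarrow> hdr i (\<lambda>y. F y + G y) x (a + b)"
  unfolding hdr_def by (rule DERIV_add)
lemma hd_diff: "hdr i F x a \<Longrightarrow> hdr i G x b \<Longrightarrow> hdr i (\<lambda>y. F y - G y) x (a - b)"
  unfolding hdr_def by (rule DERIV_diff)
lemma hd_mult: "hdr i F x a \<Longrightarrow> hdr i G x b \<Longrightarrow> hdr i (\<lambda>y. F y * G y) x (a * G x + F x * b)"
  unfolding hdr_def by (drule (1) DERIV_mult) (simp add: mult.commute)
lemma hd_const: "hdr i (\<lambda>y. c) x 0"
  unfolding hdr_def by simp
lemma hd_cmult: "hdr i F x a \<Longrightarrow> hdr i (\<lambda>y. c * F y) x (c * a)"
  unfolding hdr_def by (rule DERIV_cmult)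
lemma hd_sum: "(\<And>k. k \<in> S \<Longrightarrow> hdr i (F k) x (D k)) \<Longrightarrow> hdr i (\<lambda>y. \<Sum>k\<in>S. F k y) x (\<Sum>k\<in>S. D k)"
  unfolding hdr_def by (rule DERIV_sum)
lemma hd_divide: "hdr i F x a \<Longrightarrow> hdr i G x b \<Longrightarrow> G x \<noteq> 0 \<Longrightarrow>
   hdr i (\<lambda>y. F y / G y) x ((a * G x - F x * b) / (G x * G x))"
  unfolding hdr_def by (drule (1) DERIV_divide) simp_all

lemma ld_add: "ld i F x \<Longrightarrow> ld i G x \<Longrightarrow> ld i (\<lambda>y. F y + G y) x"
  unfolding ld_def using hd_add by blast
lemma ld_diff: "ld i F x \<Longrightarrow> ld i G x \<Longrightarrow> ld i (\<lambda>y. F y - G y) x"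
  unfolding ld_def using hd_diff by blast
lemma ld_mult: "ld i F x \<Longrightarrow> ld i G x \<Longrightarrow> ld i (\<lambda>y. F y * G y) x"
  unfolding ld_def using hd_mult by blast
lemma ld_const: "ld i (\<lambda>y. c) x"
  unfolding ld_def using hd_const by blast
lemma ld_cmult: "ld i F x \<Longrightarrow> ld i (\<lambda>y. c * F y) x"
  unfolding ld_def using hd_cmult by blast
lemma ld_sum: "(\<And>k. k \<in> S \<Longrightarrow> ld i (F k) x) \<Longrightarrow> ld i (\<lambda>y. \<Sum>k\<in>S. F k y) x"
  using hd_sum[of S i F x "\<lambda>k. pd i (F k) x"] ld_hd hd_ld by blast
lemma ld_divide: "ld i F x \<Longrightarrow> ld i G x \<Longrightarrow> G x \<noteq> 0 \<Longrightarrow> ld i (\<lambda>y. F y / G y) x"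
  unfolding ld_def using hd_divide by blast
lemma ld_prod: "(\<And>k. k \<in> S \<Longrightarrow> ld i (F k) x) \<Longrightarrow> ld i (\<lambda>y. \<Prod>k\<in>S. F k y) x"
proof -
  assume a: "\<And>k. k \<in> S \<Longrightarrow> ld i (F k) x"
  have "((\<lambda>t. \<Prod>k\<in>S. F k (x + t *\<^sub>R axis i 1)) has_real_derivative
     (\<Sum>k\<in>S. pd i (F k) x * (\<Prod>y\<in>S-{k}. F y (x + 0 *\<^sub>R axis i 1)))) (at 0)"
    by (rule has_field_derivative_prod) (use a ld_hd in \<open>auto simp: hdr_def\<close>)
  then show ?thesis unfolding ld_def hdr_def by blast
qed

lemma pd_add: "ld i F x \<Longrightarrow> ld i G x \<Longrightarrow> pd i (\<lambda>y. F y + G y) x = pd i F x + pd i G x"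
  by (intro hd_pd hd_add ld_hd)
lemma pd_diff: "ld i F x \<Longrightarrow> ld i G x \<Longrightarrow> pd i (\<lambda>y. F y - G y) x = pd i F x - pd i G x"
  by (intro hd_pd hd_diff ld_hd)
lemma pd_mult: "ld i F x \<Longrightarrow> ld i G x \<Longrightarrow> pd i (\<lambda>y. F y * G y) x = pd i F x * G x + F x * pd i G x"
  by (intro hd_pd hd_mult ld_hd)
lemma pd_cmult: "ld i F x \<Longrightarrow> pd i (\<lambda>y. c * F y) x = c * pd i F x"
  by (intro hd_pd hd_cmult ld_hd)
lemma pd_sum: "(\<And>k. k \<in> S \<Longrightarrow> ld i (F k) x) \<Longrightarrow> pd i (\<lambda>y. \<Sum>k\<in>S. F k y) x = (\<Sum>k\<in>S. pd i (F k) x)"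
  by (intro hd_pd hd_sum ld_hd)

lemma line_eventually:
  assumes "open U" "x \<in> U"
  shows "eventually (\<lambda>t. x + t *\<^sub>R axis i (1::real) \<in> U) (nhds (0::real))"
proof -
  have "open ((\<lambda>t::real. x + t *\<^sub>R axis i (1::real)) -` U)"
    by (intro continuous_open_vimage assms(1)) (auto intro!: continuous_intros)
  moreover have "(0::real) \<in> (\<lambda>t::real. x + t *\<^sub>R axis i (1::real)) -` U" using assms by simp
  ultimately show ?thesis unfolding eventually_nhds by blast
qed

lemma hd_local:
  assumes "open U" "x \<in> U" "\<And>y. y \<in> U \<Longrightarrow> F y = G y" "hdr i F x D"
  shows "hdr i G x D"
proof -
  have ev: "eventually (\<lambda>t. F (x + t *\<^sub>R axis i 1) = G (x + t *\<^sub>R axis i 1)) (nhds 0)"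
    using line_eventually[OF assms(1,2), of i] by (rule eventually_mono) (use assms(3) in auto)
  show ?thesis using assms(4) unfolding hdr_def using DERIV_cong_ev[OF refl ev refl] by simp
qed

lemma ld_local: "open U \<Longrightarrow> x \<in> U \<Longrightarrow> (\<And>y. y \<in> U \<Longrightarrow> F y = G y) \<Longrightarrow> ld i F x \<Longrightarrow> ld i G x"
  unfolding ld_def using hd_local by blast

lemma pd_local:
  assumes "open U" "x \<in> U" "\<And>y. y \<in> U \<Longrightarrow> F y = G y"
  shows "pd i F x = pd i G x"
proof -
  have ev: "eventually (\<lambda>t. F (x + t *\<^sub>R axis i 1) = G (x + t *\<^sub>R axis i 1)) (nhds 0)"
    using line_eventually[OF assms(1,2), of i] by (rule eventually_mono) (use assms(3) in auto)
  show ?thesis unfolding pd_def by (rule deriv_cong_ev[OF ev refl])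
qed

lemma iter_pd_append: "iter_pd (xs @ ys) F = iter_pd xs (iter_pd ys F)"
  by (induction xs) auto

lemma smooth_iter: "smooth_fun U F \<Longrightarrow> smooth_fun U (iter_pd xs F)"
  unfolding smooth_fun_def by (metis iter_pd_append)

lemma smooth_pd: "smooth_fun U F \<Longrightarrow> smooth_fun U (pd i F)"
  using smooth_iter[of U F "[i]"] by simp

lemma smooth_ld: "smooth_fun U F \<Longrightarrow> x \<in> U \<Longrightarrow> ld i F x"
  unfolding smooth_fun_def ld_def hdr_def
  using spec[of _ "[]"] DERIV_deriv_iff_real_differentiable by (metis iter_pd.simps(1))

lemma smooth_cont: "smooth_fun U F \<Longrightarrow> continuous_on U F"
  unfolding smooth_fun_def by (metis iter_pd.simps(1))



lemma line_deriv:
  assumes "smooth_fun U F" "z + s *\<^sub>R axis i 1 \<in> U"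
  shows "((\<lambda>r. F (z + r *\<^sub>R axis i 1)) has_real_derivative pd i F (z + s *\<^sub>R axis i 1)) (at s)"
proof -
  have "hdr i F (z + s *\<^sub>R axis i 1) (pd i F (z + s *\<^sub>R axis i 1))"
    by (rule ld_hd, rule smooth_ld[OF assms])
  then have "((\<lambda>t. F (z + (t + s) *\<^sub>R axis i 1)) has_real_derivative pd i F (z + s *\<^sub>R axis i 1)) (at 0)"
    unfolding hdr_def by (simp add: scaleR_add_left algebra_simps)
  then show ?thesis
    using DERIV_shift[of "\<lambda>r. F (z + r *\<^sub>R axis i 1)" _ 0 s] by simp
qed


lemma schwarz_aux:
  assumes U: "open U" and F: "smooth_fun U F" and x: "x \<in> U" and e: "\<epsilon> > 0"
  shows "\<exists>\<delta>>0. \<forall>h. 0 < h \<and> h < \<delta> \<longrightarrow>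
    \<bar>(F (x + h *\<^sub>R axis i 1 + h *\<^sub>R axis j 1) - F (x + h *\<^sub>R axis i 1) - F (x + h *\<^sub>R axis j 1) + F x) / h^2
       - pd j (pd i F) x\<bar> \<le> \<epsilon>"
proof -
  let ?e = "axis i (1::real) :: real^4" and ?d = "axis j (1::real) :: real^4"
  have Fi: "smooth_fun U (pd i F)" by (rule smooth_pd[OF F])
  have G2: "smooth_fun U (pd j (pd i F))" by (rule smooth_pd[OF Fi])
  have "isCont (pd j (pd i F)) x"
    using smooth_cont[OF G2] U x continuous_on_eq_continuous_at by blast
  then obtain d0 where d0: "d0 > 0" and hd0: "\<And>y. norm (y - x) < d0 \<Longrightarrow> \<bar>pd j (pd i F) y - pd j (pd i F) x\<bar> < \<epsilon>"
    using e unfolding continuous_at_real_range by blast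
  obtain r where r: "r > 0" "ball x r \<subseteq> U" using U x open_contains_ball by blast
  define \<delta> where "\<delta> = min d0 r / 2"
  have dpos: "\<delta> > 0" using d0 r unfolding \<delta>_def by simp
  have inU: "x + s *\<^sub>R ?e + t *\<^sub>R ?d \<in> U \<and> norm (x + s *\<^sub>R ?e + t *\<^sub>R ?d - x) < d0"
    if "\<bar>s\<bar> \<le> h" "\<bar>t\<bar> \<le> h" "h < \<delta>" for s t h
  proof -
    have "norm (s *\<^sub>R ?e + t *\<^sub>R ?d) \<le> norm (s *\<^sub>R ?e) + norm (t *\<^sub>R ?d)" by (rule norm_triangle_ineq)
    also have "\<dots> = \<bar>s\<bar> + \<bar>t\<bar>" by simp
    finally have n: "norm (s *\<^sub>R ?e + t *\<^sub>R ?d) < min d0 r" using that unfolding \<delta>_def by linarith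
    have "dist x (x + (s *\<^sub>R ?e + t *\<^sub>R ?d)) = norm (s *\<^sub>R ?e + t *\<^sub>R ?d)"
      by (metis add_diff_cancel_left' dist_commute dist_norm)
    then have "x + s *\<^sub>R ?e + t *\<^sub>R ?d \<in> ball x r" using n by (simp add: add.assoc)
    then show ?thesis using r n by (auto simp: add.assoc)
  qed
  show ?thesis
  proof (intro exI[of _ \<delta>] conjI allI impI dpos)
    fix h :: real assume h: "0 < h \<and> h < \<delta>"
    define \<psi> where "\<psi> s = F (x + s *\<^sub>R ?e + h *\<^sub>R ?d) - F (x + s *\<^sub>R ?e)" for s
    have "\<exists>\<xi>. 0 < \<xi> \<and> \<xi> < h \<and> \<psi> h - \<psi> 0 = (h - 0) *
        (pd i F (x + \<xi> *\<^sub>R ?e + h *\<^sub>R ?d) - pd i F (x + \<xi> *\<^sub>R ?e))"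
    proof (rule MVT2)
      show "0 < h" using h by simp
      fix s assume s: "0 \<le> s" "s \<le> h"
      have a: "x + h *\<^sub>R ?d + s *\<^sub>R ?e \<in> U" using inU[of s h h] s h by (simp add: algebra_simps)
      have b: "x + s *\<^sub>R ?e \<in> U" using inU[of s h 0] s h by simp
      have "((\<lambda>r. F (x + h *\<^sub>R ?d + r *\<^sub>R ?e) - F (x + r *\<^sub>R ?e)) has_real_derivative
          pd i F (x + h *\<^sub>R ?d + s *\<^sub>R ?e) - pd i F (x + s *\<^sub>R ?e)) (at s)"
        by (intro DERIV_diff line_deriv[OF F] a b)
      then show "(\<psi> has_real_derivative
          pd i F (x + s *\<^sub>R ?e + h *\<^sub>R ?d) - pd i F (x + s *\<^sub>R ?e)) (at s)"
        unfolding \<psi>_def by (simp add: algebra_simps)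
    qed
    then obtain \<xi> where xi: "0 < \<xi>" "\<xi> < h" and
      eq1: "\<psi> h - \<psi> 0 = h * (pd i F (x + \<xi> *\<^sub>R ?e + h *\<^sub>R ?d) - pd i F (x + \<xi> *\<^sub>R ?e))" by auto
    have "\<exists>\<eta>. 0 < \<eta> \<and> \<eta> < h \<and> pd i F (x + \<xi> *\<^sub>R ?e + h *\<^sub>R ?d) - pd i F (x + \<xi> *\<^sub>R ?e + 0 *\<^sub>R ?d)
       = (h - 0) * pd j (pd i F) (x + \<xi> *\<^sub>R ?e + \<eta> *\<^sub>R ?d)"
    proof (rule MVT2)
      show "0 < h" using h by simp
      fix t assume t: "0 \<le> t" "t \<le> h"
      have a: "x + \<xi> *\<^sub>R ?e + t *\<^sub>R ?d \<in> U" using inU[of \<xi> h t] t h xi by simp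
      show "((\<lambda>t. pd i F (x + \<xi> *\<^sub>R ?e + t *\<^sub>R ?d)) has_real_derivative
          pd j (pd i F) (x + \<xi> *\<^sub>R ?e + t *\<^sub>R ?d)) (at t)"
        by (rule line_deriv[OF Fi a])
    qed
    then obtain \<eta> where eta: "0 < \<eta>" "\<eta> < h" and
      eq2: "pd i F (x + \<xi> *\<^sub>R ?e + h *\<^sub>R ?d) - pd i F (x + \<xi> *\<^sub>R ?e)
       = h * pd j (pd i F) (x + \<xi> *\<^sub>R ?e + \<eta> *\<^sub>R ?d)" by auto
    have num: "F (x + h *\<^sub>R ?e + h *\<^sub>R ?d) - F (x + h *\<^sub>R ?e) - F (x + h *\<^sub>R ?d) + F x
        = h^2 * pd j (pd i F) (x + \<xi> *\<^sub>R ?e + \<eta> *\<^sub>R ?d)"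
      using eq1 eq2 unfolding \<psi>_def by (simp add: power2_eq_square algebra_simps)
    have "norm (x + \<xi> *\<^sub>R ?e + \<eta> *\<^sub>R ?d - x) < d0" using inU[of \<xi> h \<eta>] xi eta h by simp
    then have "\<bar>pd j (pd i F) (x + \<xi> *\<^sub>R ?e + \<eta> *\<^sub>R ?d) - pd j (pd i F) x\<bar> < \<epsilon>" by (rule hd0)
    then show "\<bar>(F (x + h *\<^sub>R ?e + h *\<^sub>R ?d) - F (x + h *\<^sub>R ?e) - F (x + h *\<^sub>R ?d) + F x) / h^2
       - pd j (pd i F) x\<bar> \<le> \<epsilon>"
      using h by (simp add: num)
  qed
qed

lemma schwarz:
  assumes U: "open U" and F: "smooth_fun U F" and x: "x \<in> U"
  shows "pd i (pd j F) x = pd j (pd i F) x"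
proof (rule ccontr)
  assume ne: "pd i (pd j F) x \<noteq> pd j (pd i F) x"
  define \<epsilon> where "\<epsilon> = \<bar>pd i (pd j F) x - pd j (pd i F) x\<bar> / 3"
  have e: "\<epsilon> > 0" using ne unfolding \<epsilon>_def by simp
  obtain d1 where d1: "d1 > 0" and h1: "\<And>h. 0 < h \<and> h < d1 \<Longrightarrow>
    \<bar>(F (x + h *\<^sub>R axis i 1 + h *\<^sub>R axis j 1) - F (x + h *\<^sub>R axis i 1) - F (x + h *\<^sub>R axis j 1) + F x) / h^2
       - pd j (pd i F) x\<bar> \<le> \<epsilon>"
    using schwarz_aux[OF U F x e, of i j] by blast
  obtain d2 where d2: "d2 > 0" and h2: "\<And>h. 0 < h \<and> h < d2 \<Longrightarrow>
    \<bar>(F (x + h *\<^sub>R axis j 1 + h *\<^sub>R axis i 1) - F (x + h *\<^sub>R axis j 1) - F (x + h *\<^sub>R axis i 1) + F x) / h^2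
       - pd i (pd j F) x\<bar> \<le> \<epsilon>"
    using schwarz_aux[OF U F x e, of j i] by blast
  define h where "h = min d1 d2 / 2"
  have hh: "0 < h \<and> h < d1" "0 < h \<and> h < d2" using d1 d2 unfolding h_def by auto
  have c: "x + h *\<^sub>R axis j 1 + h *\<^sub>R axis i 1 = x + h *\<^sub>R axis i 1 + h *\<^sub>R axis j 1"
    by (simp add: algebra_simps)
  have q: "F (x + h *\<^sub>R axis i 1 + h *\<^sub>R axis j 1) - F (x + h *\<^sub>R axis j 1) - F (x + h *\<^sub>R axis i 1) + F x
     = F (x + h *\<^sub>R axis i 1 + h *\<^sub>R axis j 1) - F (x + h *\<^sub>R axis i 1) - F (x + h *\<^sub>R axis j 1) + F x"
    by simp
  have "\<bar>pd i (pd j F) x - pd j (pd i F) x\<bar> \<le> 2 * \<epsilon>"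
    using h1[OF hh(1)] h2[OF hh(2)] unfolding c q abs_le_iff by linarith
  then show False using e unfolding \<epsilon>_def by (simp add: field_simps)
qed



lemma matrix_inv_props:
  fixes A :: "real^4^4"
  assumes "invertible A"
  shows "A ** matrix_inv A = mat 1" "matrix_inv A ** A = mat 1"
proof -
  have "\<exists>A'. A ** A' = mat 1 \<and> A' ** A = mat 1" using assms unfolding invertible_def by blast
  then have "A ** matrix_inv A = mat 1 \<and> matrix_inv A ** A = mat 1"
    unfolding matrix_inv_def by (rule someI_ex)
  then show "A ** matrix_inv A = mat 1" "matrix_inv A ** A = mat 1" by auto
qed

lemma matrix_inv_sym:
  fixes A :: "real^4^4"
  assumes "invertible A" "transpose A = A"
  shows "transpose (matrix_inv A) = matrix_inv A"
proof -
  let ?B = "matrix_inv A"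
  have AB: "A ** ?B = mat 1" by (rule matrix_inv_props(1)[OF assms(1)])
  have "transpose (A ** ?B) = transpose ?B ** transpose A" by (rule matrix_transpose_mul)
  then have BA: "transpose ?B ** A = mat 1" using AB assms(2) by (simp add: transpose_mat)
  have "transpose ?B = transpose ?B ** (A ** ?B)" by (simp add: AB matrix_mul_rid)
  also have "\<dots> = (transpose ?B ** A) ** ?B" by (rule matrix_mul_assoc)
  also have "\<dots> = ?B" by (simp add: BA matrix_mul_lid)
  finally show ?thesis .
qed

lemma det_minkowski: "det minkowski \<noteq> 0"
proof -
  have "det minkowski = (\<Prod>i\<in>UNIV. minkowski $ i $ i)"
    by (rule det_diagonal) (simp add: minkowski_def)
  also have "\<dots> \<noteq> 0" by (simp add: minkowski_def)
  finally show ?thesis .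
qed

lemma cramer_inv:
  fixes A :: "real^4^4"
  assumes "invertible A"
  shows "matrix_inv A $ k $ l = det (\<chi> a b. if b = k then (if a = l then 1 else 0) else A $ a $ b) / det A"
proof -
  let ?B = "matrix_inv A"
  let ?c = "\<chi> k. ?B $ k $ l"
  let ?b = "\<chi> a. if a = l then 1 else (0::real)"
  have d: "det A \<noteq> 0" using assms invertible_det_nz by blast
  have "A *v ?c = ?b"
    using matrix_inv_props(1)[OF assms]
    by (auto simp: vec_eq_iff matrix_vector_mult_def matrix_matrix_mult_def mat_def)
  then have "?c = (\<chi> k. det(\<chi> i j. if j=k then ?b$i else A$i$j) / det A)"
    using cramer[OF d] by blast
  then have "?c $ k = det(\<chi> i j. if j=k then ?b$i else A$i$j) / det A" by simp
  moreover have "(\<chi> i j. if j=k then ?b$i else A$i$j) = (\<chi> a b. if b = k then (if a = l then 1 else 0) else A $ a $ b)"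
    by (simp add: vec_eq_iff)
  ultimately show ?thesis by simp
qed

lemma ld_det:
  assumes "\<And>a b. ld i (\<lambda>y. M y $ a $ b) x"
  shows "ld i (\<lambda>y. det (M y :: real^4^4)) x"
  unfolding det_def
  by (intro ld_sum ld_cmult ld_prod assms)

locale qes =
  fixes U g f \<mu> lam x
  assumes openU: "open U" and lor: "lorentzian_metric U g" and sf: "smooth_fun U f"
    and sl: "smooth_fun U lam"
    and qeq: "\<forall>y\<in>U. \<forall>i j. hess g f y i j + ric g y i j - \<mu> * (pd i f y * pd j f y) = lam y * g y $ i $ j"
    and xU: "x \<in> U"
begin

lemma gsmooth: "smooth_fun U (\<lambda>y. g y $ a $ b)"
  using lor unfolding lorentzian_metric_def by blast

lemma gsym: "y \<in> U \<Longrightarrow> g y $ a $ b = g y $ b $ a"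
proof -
  assume "y \<in> U"
  then have "transpose (g y) = g y" using lor unfolding lorentzian_metric_def by blast
  then have "transpose (g y) $ b $ a = g y $ b $ a" by simp
  then show ?thesis by (simp add: transpose_def)
qed

lemma gtrans: "y \<in> U \<Longrightarrow> transpose (g y) = g y"
  using lor unfolding lorentzian_metric_def by blast

lemma ginv: "y \<in> U \<Longrightarrow> invertible (g y)"
proof -
  assume y: "y \<in> U"
  then obtain P where P: "invertible P" "transpose P ** g y ** P = minkowski"
    using lor unfolding lorentzian_metric_def by blast
  have "det (transpose P ** g y ** P) = det P * det (g y) * det P"
    by (simp add: det_mul)
  then have "det (g y) \<noteq> 0" using P det_minkowski by auto
  then show ?thesis using invertible_det_nz by blast
qed

lemma gdet: "y \<in> U \<Longrightarrow> det (g y) \<noteq> 0"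
  using ginv invertible_det_nz by blast

lemma gi_sym: "y \<in> U \<Longrightarrow> gi g y a b = gi g y b a"
proof -
  assume y: "y \<in> U"
  have "transpose (matrix_inv (g y)) $ b $ a = matrix_inv (g y) $ b $ a"
    using matrix_inv_sym[OF ginv[OF y] gtrans[OF y]] by simp
  then show ?thesis unfolding gi_def by (simp add: transpose_def)
qed

lemma g_gi: "y \<in> U \<Longrightarrow> (\<Sum>m\<in>UNIV. g y $ a $ m * gi g y m b) = (if a = b then 1 else 0)"
  unfolding gi_def using matrix_inv_props(1)[OF ginv, of y]
  by (simp add: matrix_matrix_mult_def mat_def vec_eq_iff)

lemma gi_g: "y \<in> U \<Longrightarrow> (\<Sum>m\<in>UNIV. gi g y a m * g y $ m $ b) = (if a = b then 1 else 0)"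
  unfolding gi_def using matrix_inv_props(2)[OF ginv, of y]
  by (simp add: matrix_matrix_mult_def mat_def vec_eq_iff)

lemma ld_g: "ld i (\<lambda>y. g y $ a $ b) x"
  by (rule smooth_ld[OF gsmooth xU])

lemma ld_dg: "ld i (pd j (\<lambda>y. g y $ a $ b)) x"
  by (rule smooth_ld[OF smooth_pd[OF gsmooth] xU])

lemma ld_gi: "ld i (\<lambda>y. gi g y k l) x"
proof (rule ld_local[OF openU xU])
  show "ld i (\<lambda>y. det (\<chi> a b. if b = k then (if a = l then 1 else 0) else g y $ a $ b) / det (g y)) x"
  proof (rule ld_divide)
    show "ld i (\<lambda>y. det (\<chi> a b. if b = k then (if a = l then 1 else 0) else g y $ a $ b)) x"
    proof (rule ld_det)
      fix a b
      show "ld i (\<lambda>y. (\<chi> a b. if b = k then (if a = l then 1 else 0) else g y $ a $ b) $ a $ b) x"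
        by (cases "b = k") (simp_all add: ld_const ld_g)
    qed
    show "ld i (\<lambda>y. det (g y)) x" by (rule ld_det) (rule ld_g)
    show "det (g x) \<noteq> 0" by (rule gdet[OF xU])
  qed
  fix y assume "y \<in> U"
  show "det (\<chi> a b. if b = k then (if a = l then 1 else 0) else g y $ a $ b) / det (g y) = gi g y k l"
    unfolding gi_def by (rule sym[OF cramer_inv[OF ginv[OF \<open>y \<in> U\<close>]]])
qed


lemma ld_Chr: "ld i (\<lambda>y. Chr g y k a b) x"
  unfolding Chr_def
  apply (rule ld_cmult)
  apply (rule ld_sum)
  apply (rule ld_mult)
  apply (rule ld_gi)
  apply (rule ld_diff)
  apply (rule ld_add)
  apply (rule ld_dg)
  apply (rule ld_dg)
  apply (rule ld_dg)
  done

end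


lemma u4: "(UNIV::4 set) = {0,1,2,3}" using UNIV_4 by auto
lemma s4: "(\<Sum>i\<in>(UNIV::4 set). F i) = F 0 + F 1 + F 2 + F 3"
  unfolding u4 by (simp add: add.assoc)

lemma sum_delta_r: "(\<Sum>l\<in>(UNIV::4 set). P l * (if l = t then 1 else 0)) = (P t :: real)"
  by (simp add: if_distrib[of "\<lambda>z. _ * z"] sum.delta' cong: if_cong)
lemma sum_delta_l: "(\<Sum>l\<in>(UNIV::4 set). (if t = l then 1 else 0) * P l) = (P t :: real)"
  by (simp add: if_distrib[of "\<lambda>z. z * _"] sum.delta cong: if_cong)

context qes begin

lemma LG1y:
  assumes y: "y \<in> U"
  shows "(\<Sum>m\<in>UNIV. Chr g y m a b * g y $ m $ t) =
    1/2 * (pd a (\<lambda>y. g y $ b $ t) y + pd b (\<lambda>y. g y $ a $ t) y - pd t (\<lambda>y. g y $ a $ b) y)"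
proof -
  define P where "P l = pd a (\<lambda>y. g y $ b $ l) y + pd b (\<lambda>y. g y $ a $ l) y - pd l (\<lambda>y. g y $ a $ b) y" for l
  have "(\<Sum>m\<in>UNIV. Chr g y m a b * g y $ m $ t) = (\<Sum>m\<in>UNIV. (1/2 * (\<Sum>l\<in>UNIV. gi g y m l * P l)) * g y $ m $ t)"
    unfolding Chr_def P_def by simp
  also have "\<dots> = (\<Sum>m\<in>UNIV. \<Sum>l\<in>UNIV. 1/2 * P l * (gi g y m l * g y $ m $ t))"
    by (simp add: sum_distrib_left sum_distrib_right mult_ac)
  also have "\<dots> = (\<Sum>l\<in>UNIV. \<Sum>m\<in>UNIV. 1/2 * P l * (gi g y m l * g y $ m $ t))"
    by (rule sum.swap)
  also have "\<dots> = (\<Sum>l\<in>UNIV. 1/2 * P l * (\<Sum>m\<in>UNIV. gi g y m l * g y $ m $ t))"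
    by (simp add: sum_distrib_left)
  also have "\<dots> = (\<Sum>l\<in>UNIV. 1/2 * P l * (if l = t then 1 else 0))"
  proof (rule sum.cong[OF refl])
    fix l
    have "(\<Sum>m\<in>UNIV. gi g y m l * g y $ m $ t) = (\<Sum>m\<in>UNIV. gi g y l m * g y $ m $ t)"
      by (rule sum.cong[OF refl]) (metis gi_sym[OF y])
    then show "1/2 * P l * (\<Sum>m\<in>UNIV. gi g y m l * g y $ m $ t) = 1/2 * P l * (if l = t then 1 else 0)"
      using gi_g[OF y, of l t] by simp
  qed
  also have "\<dots> = 1/2 * P t"
    by (rule sum_delta_r)
  finally show ?thesis unfolding P_def .
qed

lemma Chr_x: "Chr g x m a b = (\<Sum>l\<in>UNIV. gi g x m l * (1/2 * (pd a (\<lambda>y. g y $ b $ l) x + pd b (\<lambda>y. g y $ a $ l) x - pd l (\<lambda>y. g y $ a $ b) x)))"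
  unfolding Chr_def sum_distrib_left by (intro sum.cong refl) simp

lemma dg_sym: "pd i (\<lambda>y. g y $ a $ b) x = pd i (\<lambda>y. g y $ b $ a) x"
  by (rule pd_local[OF openU xU]) (rule gsym)

lemma Chr_sym: "Chr g x m a b = Chr g x m b a"
  unfolding Chr_def
  by (intro arg_cong[where f="\<lambda>z. 1/2 * z"] sum.cong refl) (simp add: dg_sym[of _ a b])

lemma ddg_sym2: "pd i (pd j (\<lambda>y. g y $ a $ b)) x = pd i (pd j (\<lambda>y. g y $ b $ a)) x"
  by (rule pd_local[OF openU xU]) (rule pd_local[OF openU _ gsym])

lemma ddg_sym1: "pd i (pd j (\<lambda>y. g y $ a $ b)) x = pd j (pd i (\<lambda>y. g y $ a $ b)) x"
  by (rule schwarz[OF openU gsmooth xU])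

lemma MC: "(\<Sum>l\<in>UNIV. pd i (\<lambda>y. Chr g y l j k) x * g x $ l $ t) =
   1/2 * (pd i (pd j (\<lambda>y. g y $ k $ t)) x + pd i (pd k (\<lambda>y. g y $ j $ t)) x - pd i (pd t (\<lambda>y. g y $ j $ k)) x)
   - (\<Sum>l\<in>UNIV. Chr g x l j k * pd i (\<lambda>y. g y $ l $ t) x)"
proof -
  have "pd i (\<lambda>y. \<Sum>l\<in>UNIV. Chr g y l j k * g y $ l $ t) x =
    (\<Sum>l\<in>UNIV. pd i (\<lambda>y. Chr g y l j k) x * g x $ l $ t + Chr g x l j k * pd i (\<lambda>y. g y $ l $ t) x)"
    by (simp add: pd_sum pd_mult ld_mult ld_Chr ld_g)
  moreover have "pd i (\<lambda>y. \<Sum>l\<in>UNIV. Chr g y l j k * g y $ l $ t) x =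
    pd i (\<lambda>y. 1/2 * (pd j (\<lambda>y. g y $ k $ t) y + pd k (\<lambda>y. g y $ j $ t) y - pd t (\<lambda>y. g y $ j $ k) y)) x"
    by (rule pd_local[OF openU xU]) (rule LG1y)
  moreover have "pd i (\<lambda>y. 1/2 * (pd j (\<lambda>y. g y $ k $ t) y + pd k (\<lambda>y. g y $ j $ t) y - pd t (\<lambda>y. g y $ j $ k) y)) x
     = 1/2 * (pd i (pd j (\<lambda>y. g y $ k $ t)) x + pd i (pd k (\<lambda>y. g y $ j $ t)) x - pd i (pd t (\<lambda>y. g y $ j $ k)) x)"
    apply (subst pd_cmult, rule ld_diff, rule ld_add, rule ld_dg, rule ld_dg, rule ld_dg)
    apply (subst pd_diff, rule ld_add, rule ld_dg, rule ld_dg, rule ld_dg)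
    apply (subst pd_add, rule ld_dg, rule ld_dg)
    by (rule refl)
  ultimately show ?thesis unfolding sum.distrib by linarith
qed

end


context qes begin

abbreviation "G a b \<equiv> g x $ a $ b"
abbreviation "K a b \<equiv> gi g x a b"
abbreviation "C m a b \<equiv> Chr g x m a b"
abbreviation "dC i m a b \<equiv> pd i (\<lambda>y. Chr g y m a b) x"
abbreviation "dG i a b \<equiv> pd i (\<lambda>y. g y $ a $ b) x"
abbreviation "ddG i a b c \<equiv> pd i (pd a (\<lambda>y. g y $ b $ c)) x"
definition "Gam a b t = 1/2 * (dG a b t + dG b a t - dG t a b)"
definition "Rl i j k t = (\<Sum>l\<in>UNIV. Rstd g x l i j k * G l t)"
definition "DD i j k t = 1/2 * (ddG i j k t + ddG i k j t - ddG i t j k)"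
definition "Q a b c d = (\<Sum>l\<in>UNIV. \<Sum>p\<in>UNIV. K l p * Gam a b p * Gam c d l)"

lemma LG1x: "(\<Sum>m\<in>UNIV. C m a b * G m t) = Gam a b t"
  unfolding Gam_def by (rule LG1y[OF xU])

lemma LG2: "dG i l t = Gam i l t + Gam i t l"
  unfolding Gam_def using dg_sym[of i t l] by (simp add: field_simps)

lemma Cdef: "C l j k = (\<Sum>p\<in>UNIV. K l p * Gam j k p)"
  unfolding Gam_def by (rule Chr_x)

lemma Rl_A: "Rl i j k t = (\<Sum>l\<in>UNIV. dC i l j k * G l t) - (\<Sum>l\<in>UNIV. dC j l i k * G l t)
   + (\<Sum>m\<in>UNIV. C m j k * (\<Sum>l\<in>UNIV. C l i m * G l t)) - (\<Sum>m\<in>UNIV. C m i k * (\<Sum>l\<in>UNIV. C l j m * G l t))"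
  unfolding Rl_def Rstd_def by (simp only: s4) (simp add: algebra_simps)

lemma Rl_B: "Rl i j k t = DD i j k t - DD j i k t - (\<Sum>l\<in>UNIV. C l j k * Gam i t l) + (\<Sum>l\<in>UNIV. C l i k * Gam j t l)"
proof -
  have "Rl i j k t = (DD i j k t - (\<Sum>l\<in>UNIV. C l j k * (Gam i l t + Gam i t l)))
     - (DD j i k t - (\<Sum>l\<in>UNIV. C l i k * (Gam j l t + Gam j t l)))
     + (\<Sum>m\<in>UNIV. C m j k * Gam i m t) - (\<Sum>m\<in>UNIV. C m i k * Gam j m t)"
    unfolding Rl_A MC LG1x DD_def LG2[symmetric] by simp
  then show ?thesis by (simp add: sum.distrib distrib_left algebra_simps)
qed

lemma Rl_C: "(\<Sum>l\<in>UNIV. C l j k * Gam i t l) = Q j k i t"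
  unfolding Q_def Cdef by (simp add: sum_distrib_right sum_distrib_left mult_ac)

lemma Q_sym: "Q a b c d = Q c d a b"
proof -
  have "Q a b c d = (\<Sum>p\<in>UNIV. \<Sum>l\<in>UNIV. K l p * Gam a b p * Gam c d l)"
    unfolding Q_def by (rule sum.swap)
  also have "\<dots> = Q c d a b"
    unfolding Q_def
    by (intro sum.cong refl) (simp add: gi_sym[OF xU, of _ _] mult_ac)
  finally show ?thesis .
qed

lemma E3: "Rl i j k t = - Rl i j t k"
proof -
  have d1: "DD i j k t + DD i j t k = ddG i j k t" unfolding DD_def using ddg_sym2[of i j t k] by (simp add: field_simps)
  have d2: "DD j i k t + DD j i t k = ddG j i k t" unfolding DD_def using ddg_sym2[of j i t k] by (simp add: field_simps)
  have d3: "ddG i j k t = ddG j i k t" by (rule ddg_sym1)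
  show ?thesis unfolding Rl_B Rl_C using d1 d2 d3 Q_sym[of j t i k] Q_sym[of i t j k] by simp
qed

end


context qes begin

abbreviation "Fd a \<equiv> pd a f x"
abbreviation "F2 a b \<equiv> pd a (pd b f) x"
abbreviation "F3 i a b \<equiv> pd i (pd a (pd b f)) x"
abbreviation "Hs a b \<equiv> hess g f x a b"
abbreviation "rho a b \<equiv> ric g x a b"

lemma F2_sym: "F2 a b = F2 b a"
  by (rule schwarz[OF openU sf xU])

lemma F3_sym: "F3 i a b = F3 a i b"
  by (rule schwarz[OF openU smooth_pd[OF sf] xU])

lemma hess_x: "Hs a b = F2 a b - (\<Sum>m\<in>UNIV. C m a b * Fd m)"
  unfolding hess_def by simp

lemma Hs_sym: "Hs a b = Hs b a"
  unfolding hess_x using F2_sym[of a b] Chr_sym by simp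

lemma rho_x: "rho a b = lam x * G a b - Hs a b + \<mu> * (Fd a * Fd b)"
  using qeq xU by (simp add: algebra_simps)

lemma rho_sym: "rho a b = rho b a"
  unfolding rho_x using Hs_sym[of a b] gsym[OF xU, of a b] by (simp add: mult_ac)

lemma ld_f1: "ld i (pd a f) x" by (rule smooth_ld[OF smooth_pd[OF sf] xU])
lemma ld_f2: "ld i (pd a (pd b f)) x" by (rule smooth_ld[OF smooth_pd[OF smooth_pd[OF sf]] xU])
lemma ld_lam: "ld i lam x" by (rule smooth_ld[OF sl xU])

lemma dric: "pd i (\<lambda>y. ric g y j k) x =
   pd i lam x * G j k + lam x * dG i j k
   - (F3 i j k - (\<Sum>m\<in>UNIV. dC i m j k * Fd m + C m j k * F2 i m))
   + \<mu> * (F2 i j * Fd k + Fd j * F2 i k)"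
proof -
  have "pd i (\<lambda>y. ric g y j k) x = pd i (\<lambda>y. lam y * g y $ j $ k -
      (pd j (pd k f) y - (\<Sum>m\<in>UNIV. Chr g y m j k * pd m f y)) + \<mu> * (pd j f y * pd k f y)) x"
  proof (rule pd_local[OF openU xU])
    fix y assume "y \<in> U"
    then have "hess g f y j k + ric g y j k - \<mu> * (pd j f y * pd k f y) = lam y * g y $ j $ k"
      using qeq by blast
    then show "ric g y j k = lam y * g y $ j $ k -
      (pd j (pd k f) y - (\<Sum>m\<in>UNIV. Chr g y m j k * pd m f y)) + \<mu> * (pd j f y * pd k f y)"
      unfolding hess_def by simp
  qed
  also have "\<dots> = pd i lam x * G j k + lam x * dG i j k
   - (F3 i j k - (\<Sum>m\<in>UNIV. dC i m j k * Fd m + C m j k * F2 i m))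
   + \<mu> * (F2 i j * Fd k + Fd j * F2 i k)"
    apply (subst pd_add)
      apply (intro ld_diff ld_mult ld_lam ld_g ld_f2 ld_sum ld_Chr ld_f1)
     apply (intro ld_cmult ld_mult ld_f1)
    apply (subst pd_diff)
      apply (intro ld_diff ld_mult ld_lam ld_g ld_f2 ld_sum ld_Chr ld_f1)
     apply (intro ld_diff ld_mult ld_lam ld_g ld_f2 ld_sum ld_Chr ld_f1)
    apply (subst pd_mult, rule ld_lam, rule ld_g)
    apply (subst pd_diff, rule ld_f2)
     apply (intro ld_sum ld_mult ld_Chr ld_f1)
    apply (subst pd_sum)
     apply (intro ld_mult ld_Chr ld_f1)
    apply (subst pd_cmult, intro ld_mult ld_f1)
    apply (subst pd_mult, rule ld_f1, rule ld_f1)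
    apply (subst pd_mult, rule ld_Chr, rule ld_f1)
    apply simp
    done
  finally show ?thesis .
qed

end


context qes begin

lemma NG: "dG i j k = (\<Sum>m\<in>UNIV. C m i j * G m k + C m i k * G j m)"
proof -
  have "(\<Sum>m\<in>UNIV. C m i k * G j m) = (\<Sum>m\<in>UNIV. C m i k * G m j)"
    by (rule sum.cong[OF refl]) (simp add: gsym[OF xU])
  then show ?thesis by (simp add: sum.distrib LG1x LG2)
qed

definition "NH i j k = (F3 i j k - (\<Sum>m\<in>UNIV. dC i m j k * Fd m + C m j k * F2 i m))
   - (\<Sum>m\<in>UNIV. C m i j * Hs m k + C m i k * Hs j m)"

lemma nr_formula: "nabla_ric g x i j k = pd i lam x * G j k
   + lam x * (dG i j k - (\<Sum>m\<in>UNIV. C m i j * G m k + C m i k * G j m))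
   - NH i j k + \<mu> * (Hs i j * Fd k + Fd j * Hs i k)"
  unfolding nabla_ric_def dric NH_def rho_x hess_x
  by (simp only: s4) (simp add: algebra_simps)

lemma nr2: "nabla_ric g x i j k = pd i lam x * G j k - NH i j k + \<mu> * (Hs i j * Fd k + Fd j * Hs i k)"
  unfolding nr_formula NG[symmetric] by simp

lemma NH_anti: "NH i j k - NH j i k = - (\<Sum>p\<in>UNIV. Rstd g x p i j k * Fd p)"
  unfolding NH_def hess_x Rstd_def
  by (simp only: s4) (simp add: algebra_simps F3_sym[of i j k] Chr_sym F2_sym)

lemma RICCI: "nabla_ric g x i j k - nabla_ric g x j i k =
   pd i lam x * G j k - pd j lam x * G i k + (\<Sum>p\<in>UNIV. Rstd g x p i j k * Fd p)
   + \<mu> * (Fd j * Hs i k - Fd i * Hs j k)"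
proof -
  have "nabla_ric g x i j k - nabla_ric g x j i k = pd i lam x * G j k - pd j lam x * G i k
    - (NH i j k - NH j i k) + \<mu> * (Fd j * Hs i k - Fd i * Hs j k)"
    unfolding nr2 using Hs_sym[of i j] by (simp add: algebra_simps)
  then show ?thesis unfolding NH_anti by simp
qed

end


definition c1 :: "(4 \<Rightarrow> real) \<Rightarrow> real^4 \<Rightarrow> real" where
  "c1 A X = (\<Sum>i\<in>UNIV. A i * X $ i)"
definition c3 :: "(4 \<Rightarrow> 4 \<Rightarrow> 4 \<Rightarrow> real) \<Rightarrow> real^4 \<Rightarrow> real^4 \<Rightarrow> real^4 \<Rightarrow> real" where
  "c3 T X Y Z = (\<Sum>i\<in>UNIV. \<Sum>j\<in>UNIV. \<Sum>k\<in>UNIV. T i j k * X $ i * Y $ j * Z $ k)"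

lemma c3_add: "c3 (\<lambda>i j k. A i j k + B i j k) X Y Z = c3 A X Y Z + c3 B X Y Z"
  unfolding c3_def by (simp add: sum.distrib algebra_simps)
lemma c3_diff: "c3 (\<lambda>i j k. A i j k - B i j k) X Y Z = c3 A X Y Z - c3 B X Y Z"
  unfolding c3_def by (simp add: sum_subtractf algebra_simps)
lemma c3_cmult: "c3 (\<lambda>i j k. c * A i j k) X Y Z = c * c3 A X Y Z"
  unfolding c3_def by (simp add: sum_distrib_left algebra_simps)
lemma c3_neg: "c3 (\<lambda>i j k. - A i j k) X Y Z = - c3 A X Y Z"
  unfolding c3_def by (simp add: sum_negf)
lemma c3_zero: "(\<And>i j k. A i j k = 0) \<Longrightarrow> c3 A X Y Z = 0"
  unfolding c3_def by simp
lemma c3_S1: "c3 (\<lambda>i j k. A i * B j k) X Y Z = c1 A X * ev2 B Y Z"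
  unfolding c3_def c1_def ev2_def sum_product by (simp add: sum_distrib_left mult_ac)
lemma c3_S2: "c3 (\<lambda>i j k. A j * B i k) X Y Z = c1 A Y * ev2 B X Z"
proof -
  have "c3 (\<lambda>i j k. A j * B i k) X Y Z = (\<Sum>j\<in>UNIV. \<Sum>i\<in>UNIV. \<Sum>k\<in>UNIV. A j * B i k * X $ i * Y $ j * Z $ k)"
    unfolding c3_def by (rule sum.swap)
  then show ?thesis unfolding c1_def ev2_def sum_product by (simp add: sum_distrib_left mult_ac)
qed
lemma c3_S2': "c3 (\<lambda>i j k. B i k * A j) X Y Z = c1 A Y * ev2 B X Z"
  using c3_S2[of A B X Y Z] by (simp add: mult.commute)
lemma ev4_c3: "ev4 W X Y Z T = c3 (\<lambda>i j k. \<Sum>l\<in>UNIV. W i j k l * T $ l) X Y Z"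
  unfolding ev4_def c3_def by (simp add: sum_distrib_left sum_distrib_right mult_ac)

lemma c1_add: "c1 (\<lambda>i. A i + B i) X = c1 A X + c1 B X"
  unfolding c1_def by (simp add: sum.distrib algebra_simps)
lemma c1_diff: "c1 (\<lambda>i. A i - B i) X = c1 A X - c1 B X"
  unfolding c1_def by (simp add: sum_subtractf algebra_simps)
lemma c1_cmult: "c1 (\<lambda>i. c * A i) X = c * c1 A X"
  unfolding c1_def by (simp add: sum_distrib_left algebra_simps)
lemma c1_zero: "(\<And>i. A i = 0) \<Longrightarrow> c1 A X = 0"
  unfolding c1_def by simp

lemma ev2_scale1: "ev2 B (c *\<^sub>R X) Y = c * ev2 B X Y"
  unfolding ev2_def by (simp add: sum_distrib_left mult_ac)
lemma ev2_scale2: "ev2 B X (c *\<^sub>R Y) = c * ev2 B X Y"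
  unfolding ev2_def by (simp add: sum_distrib_left mult_ac)
lemma gv_ev2: "gv g y X Y = ev2 (\<lambda>i j. g y $ i $ j) X Y"
  unfolding gv_def ev2_def by simp

context qes begin

abbreviation "N \<equiv> grad g f x"
abbreviation "tau \<equiv> scal g x"
definition "RF i j k = (\<Sum>p\<in>UNIV. Rstd g x p i j k * Fd p)"
definition "rN i = (\<Sum>l\<in>UNIV. rho i l * N $ l)"
definition "aa i = pd i lam x - pd i (scal g) x / 6"

lemma NL: "(\<Sum>t\<in>UNIV. G l t * N $ t) = Fd l"
proof -
  have "(\<Sum>t\<in>UNIV. G l t * N $ t) = (\<Sum>t\<in>UNIV. \<Sum>m\<in>UNIV. G l t * (K t m * Fd m))"
    unfolding grad_def by (simp add: sum_distrib_left)
  also have "\<dots> = (\<Sum>m\<in>UNIV. \<Sum>t\<in>UNIV. G l t * (K t m * Fd m))" by (rule sum.swap)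
  also have "\<dots> = (\<Sum>m\<in>UNIV. (\<Sum>t\<in>UNIV. G l t * K t m) * Fd m)"
    by (simp add: sum_distrib_right mult.assoc)
  also have "\<dots> = Fd l" by (simp add: g_gi[OF xU] sum_delta_l)
  finally show ?thesis .
qed

lemma gvN: "gv g x X N = c1 Fd X"
proof -
  have "gv g x X N = (\<Sum>i\<in>UNIV. X $ i * (\<Sum>j\<in>UNIV. G i j * N $ j))"
    unfolding gv_def by (simp add: sum_distrib_left mult_ac)
  then show ?thesis unfolding c1_def NL by (simp add: mult.commute)
qed

lemma gvN': "gv g x N X = c1 Fd X"
proof -
  have "gv g x N X = gv g x X N" unfolding gv_def
    by (subst sum.swap) (simp add: gsym[OF xU] mult_ac)
  then show ?thesis using gvN by simp
qed

lemma ev2N: "ev2 rho X N = c1 rN X"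
  unfolding ev2_def c1_def rN_def by (simp add: sum_distrib_left mult_ac)

lemma ev2N': "ev2 rho N X = c1 rN X"
proof -
  have "ev2 rho N X = ev2 rho X N" unfolding ev2_def
    by (subst sum.swap) (simp add: rho_sym mult_ac)
  then show ?thesis using ev2N by simp
qed

lemma RF_Rl: "RF i j k = (\<Sum>t\<in>UNIV. Rl i j k t * N $ t)"
proof -
  have "(\<Sum>t\<in>UNIV. Rl i j k t * N $ t) = (\<Sum>t\<in>UNIV. \<Sum>l\<in>UNIV. Rstd g x l i j k * (G l t * N $ t))"
    unfolding Rl_def sum_distrib_right by (simp add: mult.assoc)
  also have "\<dots> = (\<Sum>l\<in>UNIV. \<Sum>t\<in>UNIV. Rstd g x l i j k * (G l t * N $ t))" by (rule sum.swap)
  also have "\<dots> = RF i j k" unfolding RF_def by (simp add: sum_distrib_left[symmetric] NL)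
  finally show ?thesis by simp
qed

end


context qes begin

lemma Hs_eq: "Hs a b = lam x * G a b - rho a b + \<mu> * (Fd a * Fd b)"
  using rho_x[of a b] by simp

lemma E1c:
  assumes hw: "\<And>i j k. divW g x i j k = 0"
  shows "aa i * G j k - aa j * G i k + RF i j k + \<mu> * lam x * (Fd j * G i k - Fd i * G j k)
     - \<mu> * (Fd j * rho i k - Fd i * rho j k) = 0"
proof -
  have d: "- 1/2 * (nabla_ric g x i j k - nabla_ric g x j i k)
     + 1/12 * (pd i (scal g) x * G j k - pd j (scal g) x * G i k) = 0"
    using hw[of i j k] unfolding divW_def .
  have e: "aa i * G j k - aa j * G i k + RF i j k + \<mu> * lam x * (Fd j * G i k - Fd i * G j k)
     - \<mu> * (Fd j * rho i k - Fd i * rho j k) =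
     -2 * (- 1/2 * (nabla_ric g x i j k - nabla_ric g x j i k)
     + 1/12 * (pd i (scal g) x * G j k - pd j (scal g) x * G i k))"
    unfolding RICCI aa_def RF_def Hs_eq by (simp add: algebra_simps)
  show ?thesis unfolding e d by simp
qed

lemma Rstd_anti: "Rstd g x l i j t = - Rstd g x l j i t"
  unfolding Rstd_def by (simp only: s4)

lemma KRl: "(\<Sum>j\<in>UNIV. \<Sum>k\<in>UNIV. K j k * Rl i j k t) = rho i t"
proof -
  have "(\<Sum>j\<in>UNIV. \<Sum>k\<in>UNIV. K j k * Rl i j k t) = - (\<Sum>j\<in>UNIV. \<Sum>k\<in>UNIV. K j k * Rl i j t k)"
  proof -
    have h: "K j k * Rl i j k t = - (K j k * Rl i j t k)" for j k by (simp add: E3[of i j k t])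
    show ?thesis by (simp only: h sum_negf)
  qed
  also have "\<dots> = - (\<Sum>j\<in>UNIV. \<Sum>l\<in>UNIV. Rstd g x l i j t * (\<Sum>k\<in>UNIV. G l k * K k j))"
  proof -
    have "\<And>j. (\<Sum>k\<in>UNIV. K j k * Rl i j t k) = (\<Sum>l\<in>UNIV. Rstd g x l i j t * (\<Sum>k\<in>UNIV. G l k * K k j))"
    proof -
      fix j
      have "(\<Sum>k\<in>UNIV. K j k * Rl i j t k) = (\<Sum>k\<in>UNIV. \<Sum>l\<in>UNIV. Rstd g x l i j t * (G l k * K k j))"
        unfolding Rl_def sum_distrib_left by (intro sum.cong refl) (simp add: gi_sym[OF xU, of j] mult_ac)
      also have "\<dots> = (\<Sum>l\<in>UNIV. \<Sum>k\<in>UNIV. Rstd g x l i j t * (G l k * K k j))" by (rule sum.swap)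
      finally show "(\<Sum>k\<in>UNIV. K j k * Rl i j t k) = (\<Sum>l\<in>UNIV. Rstd g x l i j t * (\<Sum>k\<in>UNIV. G l k * K k j))"
        by (simp add: sum_distrib_left)
    qed
    then show ?thesis by simp
  qed
  also have "\<dots> = - (\<Sum>j\<in>UNIV. Rstd g x j i j t)"
    by (simp add: g_gi[OF xU] sum_delta_r)
  also have "\<dots> = rho i t"
    unfolding ric_def by (simp add: Rstd_anti[of _ i] sum_negf)
  finally show ?thesis .
qed

lemma KRF: "(\<Sum>j\<in>UNIV. \<Sum>k\<in>UNIV. K j k * RF i j k) = rN i"
proof -
  have "(\<Sum>j\<in>UNIV. \<Sum>k\<in>UNIV. K j k * RF i j k) = (\<Sum>j\<in>UNIV. \<Sum>k\<in>UNIV. \<Sum>t\<in>UNIV. K j k * Rl i j k t * N $ t)"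
    unfolding RF_Rl by (simp add: sum_distrib_left mult_ac)
  also have "\<dots> = (\<Sum>j\<in>UNIV. \<Sum>t\<in>UNIV. \<Sum>k\<in>UNIV. K j k * Rl i j k t * N $ t)"
    by (rule sum.cong[OF refl], rule sum.swap)
  also have "\<dots> = (\<Sum>t\<in>UNIV. \<Sum>j\<in>UNIV. \<Sum>k\<in>UNIV. K j k * Rl i j k t * N $ t)"
    by (rule sum.swap)
  also have "\<dots> = (\<Sum>t\<in>UNIV. (\<Sum>j\<in>UNIV. \<Sum>k\<in>UNIV. K j k * Rl i j k t) * N $ t)"
    by (simp add: sum_distrib_right)
  also have "\<dots> = rN i" unfolding KRl rN_def ..
  finally show ?thesis .
qed

end


lemma c3_S1': "c3 (\<lambda>i j k. B j k * A i) X Y Z = c1 A X * ev2 B Y Z"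
  using c3_S1[of A B X Y Z] by (simp add: mult.commute)

context qes begin

lemma KG_r: "(\<Sum>k\<in>UNIV. G i k * K k j) = (if i = j then 1 else 0)"
  by (rule g_gi[OF xU])

lemma trA: "(\<Sum>j\<in>UNIV. \<Sum>k\<in>UNIV. K j k * (A j * G i k)) = A i"
proof -
  have "(\<Sum>j\<in>UNIV. \<Sum>k\<in>UNIV. K j k * (A j * G i k)) = (\<Sum>j\<in>UNIV. A j * (\<Sum>k\<in>UNIV. G i k * K k j))"
  proof (rule sum.cong[OF refl])
    fix j
    show "(\<Sum>k\<in>UNIV. K j k * (A j * G i k)) = A j * (\<Sum>k\<in>UNIV. G i k * K k j)"
      unfolding sum_distrib_left
    proof (rule sum.cong[OF refl])
      fix k
      have "K j k = K k j" by (rule gi_sym[OF xU])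
      then show "K j k * (A j * G i k) = A j * (G i k * K k j)" by simp
    qed
  qed
  also have "\<dots> = A i" by (simp only: KG_r) (simp add: if_distrib[of "\<lambda>z. _ * z"] cong: if_cong)
  finally show ?thesis .
qed

lemma trG: "(\<Sum>j\<in>UNIV. \<Sum>k\<in>UNIV. K j k * G j k) = 4"
proof -
  have "(\<Sum>j\<in>UNIV. \<Sum>k\<in>UNIV. K j k * G j k) = (\<Sum>j\<in>UNIV. (\<Sum>k\<in>UNIV. G j k * K k j))"
  proof (rule sum.cong[OF refl])
    fix j
    show "(\<Sum>k\<in>UNIV. K j k * G j k) = (\<Sum>k\<in>UNIV. G j k * K k j)"
    proof (rule sum.cong[OF refl])
      fix k
      have "K j k = K k j" by (rule gi_sym[OF xU])
      then show "K j k * G j k = G j k * K k j" by simp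
    qed
  qed
  also have "\<dots> = (\<Sum>j\<in>(UNIV::4 set). 1)" by (simp add: KG_r)
  finally show ?thesis by simp
qed

lemma trRho: "(\<Sum>j\<in>UNIV. \<Sum>k\<in>UNIV. K j k * rho j k) = tau"
  unfolding scal_def ..

lemma trFrho: "(\<Sum>j\<in>UNIV. \<Sum>k\<in>UNIV. K j k * (Fd j * rho i k)) = rN i"
proof -
  have "(\<Sum>j\<in>UNIV. \<Sum>k\<in>UNIV. K j k * (Fd j * rho i k)) = (\<Sum>k\<in>UNIV. \<Sum>j\<in>UNIV. K j k * (Fd j * rho i k))"
    by (rule sum.swap)
  also have "\<dots> = (\<Sum>k\<in>UNIV. rho i k * (\<Sum>j\<in>UNIV. K k j * Fd j))"
  proof (rule sum.cong[OF refl])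
    fix k
    show "(\<Sum>j\<in>UNIV. K j k * (Fd j * rho i k)) = rho i k * (\<Sum>j\<in>UNIV. K k j * Fd j)"
      unfolding sum_distrib_left
    proof (rule sum.cong[OF refl])
      fix j
      have "K j k = K k j" by (rule gi_sym[OF xU])
      then show "K j k * (Fd j * rho i k) = rho i k * (K k j * Fd j)" by simp
    qed
  qed
  also have "\<dots> = rN i" unfolding rN_def grad_def by simp
  finally show ?thesis .
qed

lemma TR: "3 * aa i + rN i - 3 * \<mu> * lam x * Fd i - \<mu> * rN i + \<mu> * tau * Fd i = 0"
  if hw: "\<And>i j k. divW g x i j k = 0"
proof -
  have "0 = (\<Sum>j\<in>UNIV. \<Sum>k\<in>UNIV. K j k * (aa i * G j k - aa j * G i k + RF i j k + \<mu> * lam x * (Fd j * G i k - Fd i * G j k)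
     - \<mu> * (Fd j * rho i k - Fd i * rho j k)))"
    using E1c[OF hw] by simp
  also have "\<dots> = aa i * (\<Sum>j\<in>UNIV. \<Sum>k\<in>UNIV. K j k * G j k) - (\<Sum>j\<in>UNIV. \<Sum>k\<in>UNIV. K j k * (aa j * G i k))
     + (\<Sum>j\<in>UNIV. \<Sum>k\<in>UNIV. K j k * RF i j k)
     + \<mu> * lam x * ((\<Sum>j\<in>UNIV. \<Sum>k\<in>UNIV. K j k * (Fd j * G i k)) - Fd i * (\<Sum>j\<in>UNIV. \<Sum>k\<in>UNIV. K j k * G j k))
     - \<mu> * ((\<Sum>j\<in>UNIV. \<Sum>k\<in>UNIV. K j k * (Fd j * rho i k)) - Fd i * (\<Sum>j\<in>UNIV. \<Sum>k\<in>UNIV. K j k * rho j k))"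
    by (simp add: sum.distrib sum_subtractf sum_distrib_left algebra_simps)
  also have "\<dots> = 3 * aa i + rN i - 3 * \<mu> * lam x * Fd i - \<mu> * rN i + \<mu> * tau * Fd i"
    unfolding trG trA trRho trFrho KRF by (simp add: algebra_simps)
  finally show ?thesis by simp
qed

lemma E1v:
  assumes hw: "\<And>i j k. divW g x i j k = 0"
  shows "c1 aa X * gv g x Y Z - c1 aa Y * gv g x X Z + c3 RF X Y Z
    + \<mu> * lam x * (c1 Fd Y * gv g x X Z - c1 Fd X * gv g x Y Z)
    - \<mu> * (c1 Fd Y * ev2 rho X Z - c1 Fd X * ev2 rho Y Z) = 0"
proof -
  have "c3 (\<lambda>i j k. aa i * G j k - aa j * G i k + RF i j k + \<mu> * lam x * (Fd j * G i k - Fd i * G j k)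
     - \<mu> * (Fd j * rho i k - Fd i * rho j k)) X Y Z = 0"
    by (rule c3_zero) (rule E1c[OF hw])
  then show ?thesis
    by (simp only: c3_add c3_diff c3_cmult c3_S1 c3_S2 gv_ev2)
qed

lemma WN: "(\<Sum>l\<in>UNIV. Wc g x i j k l * N $ l) = - RF i j k + tau / 6 * (G i k * Fd j - Fd i * G j k)
   + 1/2 * (rN i * G j k - rho i k * Fd j + rho j k * Fd i - rN j * G i k)"
proof -
  have r: "(\<Sum>l\<in>UNIV. Rc g x i j k l * N $ l) = - RF i j k"
    unfolding RF_Rl Rc_def Rl_def by (simp add: sum_negf)
  have "(\<Sum>l\<in>UNIV. Wc g x i j k l * N $ l) = (\<Sum>l\<in>UNIV. Rc g x i j k l * N $ l)
     + tau / 6 * (G i k * (\<Sum>l\<in>UNIV. G j l * N $ l) - (\<Sum>l\<in>UNIV. G i l * N $ l) * G j k)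
     + 1/2 * ((\<Sum>l\<in>UNIV. rho i l * N $ l) * G j k - rho i k * (\<Sum>l\<in>UNIV. G j l * N $ l)
         + rho j k * (\<Sum>l\<in>UNIV. G i l * N $ l) - (\<Sum>l\<in>UNIV. rho j l * N $ l) * G i k)"
    unfolding Wc_def by (simp only: s4) (simp add: algebra_simps)
  then show ?thesis unfolding r NL rN_def by simp
qed

lemma Wv: "ev4 (Wc g x) X N Z N = - c3 RF X N Z + tau / 6 * (c1 Fd N * gv g x X Z - c1 Fd X * gv g x N Z)
   + 1/2 * (c1 rN X * gv g x N Z - c1 Fd N * ev2 rho X Z + c1 Fd X * ev2 rho N Z - c1 rN N * gv g x X Z)"
  unfolding ev4_c3 WN
  by (simp only: c3_add c3_diff c3_cmult c3_S1 c3_S1' c3_S2 c3_S2' c3_neg gv_ev2)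

end


context qes begin

lemma n_eq: "c1 Fd N = gv g x N N" using gvN[of N] by simp

lemma R1:
  assumes hw: "\<And>i j k. divW g x i j k = 0"
    and wc: "\<And>X Z. ev4 (Wc g x) X N Z N = 0"
    and n0: "gv g x N N \<noteq> 0" and mu: "\<mu> \<noteq> - 1/2"
    and dX: "c1 Fd X = 0"
  shows "c1 rN X = 0"
proof -
  define n where "n = c1 Fd N"
  have nn: "n \<noteq> 0" using n0 n_eq unfolding n_def by simp
  have gXN: "gv g x X N = 0" using gvN dX by simp
  have gNN: "gv g x N N = n" unfolding n_def using n_eq by simp
  have e1: "ev2 rho X N = c1 rN X" by (rule ev2N)
  have "0 = - c3 RF X N N + tau / 6 * (n * gv g x X N - c1 Fd X * gv g x N N)
     + 1/2 * (c1 rN X * gv g x N N - n * ev2 rho X N + c1 Fd X * ev2 rho N N - c1 rN N * gv g x X N)"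
    using wc[of X N] Wv[of X N] unfolding n_def by simp
  then have c3z: "c3 RF X N N = 0" unfolding gXN dX gNN e1 by (simp add: algebra_simps)
  have "c1 aa X * gv g x N N - c1 aa N * gv g x X N + c3 RF X N N
    + \<mu> * lam x * (c1 Fd N * gv g x X N - c1 Fd X * gv g x N N)
    - \<mu> * (c1 Fd N * ev2 rho X N - c1 Fd X * ev2 rho N N) = 0"
    by (rule E1v[OF hw])
  then have "n * (c1 aa X - \<mu> * c1 rN X) = 0"
    unfolding gXN dX gNN e1 c3z n_def[symmetric] by (simp add: algebra_simps)
  then have a: "c1 aa X = \<mu> * c1 rN X" using nn by simp
  have "c1 (\<lambda>i. 3 * aa i + rN i - 3 * \<mu> * lam x * Fd i - \<mu> * rN i + \<mu> * tau * Fd i) X = 0"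
    by (rule c1_zero) (rule TR[OF hw])
  then have "3 * c1 aa X + c1 rN X - 3 * \<mu> * lam x * c1 Fd X - \<mu> * c1 rN X + \<mu> * tau * c1 Fd X = 0"
    by (simp only: c1_add c1_diff c1_cmult)
  then have "(2 * \<mu> + 1) * c1 rN X = 0" unfolding a dX by (simp add: algebra_simps)
  moreover have "2 * \<mu> + 1 \<noteq> 0" using mu by simp
  ultimately show ?thesis by simp
qed

lemma R2:
  assumes hw: "\<And>i j k. divW g x i j k = 0"
    and wc: "\<And>X Z. ev4 (Wc g x) X N Z N = 0"
    and n0: "gv g x N N \<noteq> 0" and mu: "\<mu> \<noteq> - 1/2"
    and dX: "c1 Fd X = 0" and dZ: "c1 Fd Z = 0" and gXZ: "gv g x X Z = 0"
  shows "ev2 rho X Z = 0"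
proof -
  define n where "n = c1 Fd N"
  have nn: "n \<noteq> 0" using n0 n_eq unfolding n_def by simp
  have gXN: "gv g x X N = 0" using gvN dX by simp
  have gNZ: "gv g x N Z = 0" using gvN' dZ by simp
  have "0 = - c3 RF X N Z + tau / 6 * (n * gv g x X Z - c1 Fd X * gv g x N Z)
     + 1/2 * (c1 rN X * gv g x N Z - n * ev2 rho X Z + c1 Fd X * ev2 rho N Z - c1 rN N * gv g x X Z)"
    using wc[of X Z] Wv[of X Z] unfolding n_def by simp
  then have w: "c3 RF X N Z = - 1/2 * n * ev2 rho X Z" unfolding gXZ dX gNZ by (simp add: algebra_simps)
  have "c1 aa X * gv g x N Z - c1 aa N * gv g x X Z + c3 RF X N Z
    + \<mu> * lam x * (c1 Fd N * gv g x X Z - c1 Fd X * gv g x N Z)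
    - \<mu> * (c1 Fd N * ev2 rho X Z - c1 Fd X * ev2 rho N Z) = 0"
    by (rule E1v[OF hw])
  then have "n * ((\<mu> + 1/2) * ev2 rho X Z) = 0"
    unfolding gXZ dX gNZ w n_def[symmetric] by (simp add: algebra_simps)
  moreover have "\<mu> + 1/2 \<noteq> 0" using mu by simp
  ultimately show ?thesis using nn by simp
qed

end

lemma gv_scale2: "gv g y X (c *\<^sub>R Y) = c * gv g y X Y"
  unfolding gv_ev2 by (rule ev2_scale2)

theorem lemma2p2:
  fixes U :: "(real^4) set" and g :: metric and f :: "real^4 \<Rightarrow> real" and \<mu> :: real
    and x :: "real^4" and E :: "nat \<Rightarrow> real^4"
  assumes "open U"
    and "lorentzian_metric U g"
    and "quasi_einstein U g f \<mu>"
    and "non_isotropic U g f"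
    and "\<mu> \<noteq> - 1/2"
    and "harmonic_weyl U g"
    and "\<forall>y\<in>U. \<forall>X Z. ev4 (Wc g y) X (grad g f y) Z (grad g f y) = 0"
    and "x \<in> U"
    and "E 1 = (1 / sqrt \<bar>gv g x (grad g f x) (grad g f x)\<bar>) *\<^sub>R grad g f x"
    and "\<forall>a\<in>{1..4}. \<forall>b\<in>{1..4}. a \<noteq> b \<longrightarrow> gv g x (E a) (E b) = 0"
    and "\<forall>a\<in>{1..4}. \<bar>gv g x (E a) (E a)\<bar> = 1"
  shows "\<forall>a\<in>{1..4}. \<forall>b\<in>{1..4}. a \<noteq> b \<longrightarrow> ev2 (ric g x) (E a) (E b) = 0"
proof -
  obtain lam where sl: "smooth_fun U lam" and qeq: "\<forall>y\<in>U. \<forall>i j.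
        hess g f y i j + ric g y i j - \<mu> * (pd i f y * pd j f y) = lam y * g y $ i $ j"
    using assms(3) unfolding quasi_einstein_def by blast
  have sf: "smooth_fun U f" using assms(3) unfolding quasi_einstein_def by blast
  interpret Q: qes U g f \<mu> lam x
    using assms(1,2,8) sf sl qeq by unfold_locales auto
  have hw: "\<And>i j k. divW g x i j k = 0" using assms(6,8) unfolding harmonic_weyl_def by blast
  have wc: "\<And>X Z. ev4 (Wc g x) X (grad g f x) Z (grad g f x) = 0" using assms(7,8) by blast
  have n0: "gv g x (grad g f x) (grad g f x) \<noteq> 0" using assms(4,8) unfolding non_isotropic_def by blast
  define c where "c = 1 / sqrt \<bar>gv g x (grad g f x) (grad g f x)\<bar>"
  have c0: "c \<noteq> 0" unfolding c_def using n0 by simp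
  have E1: "E 1 = c *\<^sub>R grad g f x" unfolding c_def by (rule assms(9))
  have dE: "c1 (\<lambda>a. pd a f x) (E a) = 0" if "a \<in> {1..4}" "a \<noteq> 1" for a
  proof -
    have "gv g x (E a) (E 1) = 0" using assms(10) that by auto
    then have "c * gv g x (E a) (grad g f x) = 0" unfolding E1 gv_scale2 .
    then have "gv g x (E a) (grad g f x) = 0" using c0 by simp
    then show ?thesis using Q.gvN by simp
  qed
  show ?thesis
  proof (intro ballI impI)
    fix a b :: nat assume a: "a \<in> {1..4}" and b: "b \<in> {1..4}" and ab: "a \<noteq> b"
    show "ev2 (ric g x) (E a) (E b) = 0"
    proof (cases "a = 1")
      case True
      then have b1: "b \<noteq> 1" using ab by simp
      have "ev2 (ric g x) (E a) (E b) = c * ev2 (ric g x) (grad g f x) (E b)"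
        unfolding True E1 ev2_scale1 ..
      also have "\<dots> = c * c1 Q.rN (E b)" by (simp add: Q.ev2N')
      also have "c1 Q.rN (E b) = 0" by (rule Q.R1[OF hw wc n0 assms(5) dE[OF b b1]])
      finally show ?thesis by simp
    next
      case False
      show ?thesis
      proof (cases "b = 1")
        case True
        have "ev2 (ric g x) (E a) (E b) = c * ev2 (ric g x) (E a) (grad g f x)"
          unfolding True E1 ev2_scale2 ..
        also have "\<dots> = c * c1 Q.rN (E a)" by (simp add: Q.ev2N)
        also have "c1 Q.rN (E a) = 0" by (rule Q.R1[OF hw wc n0 assms(5) dE[OF a False]])
        finally show ?thesis by simp
      next
        case b1: False
        have "gv g x (E a) (E b) = 0" using assms(10) a b ab by auto
        then show ?thesis by (rule Q.R2[OF hw wc n0 assms(5) dE[OF a False] dE[OF b b1]])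
      qed
    qed
  qed
qed


end
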